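(* Let $\mathcal S$ be a trajectory set. The following are equivalent: (1) $\bar\sigma(0)\ge 0$. (2) (LOP) holds, the hedging price functional $I$ is positive (i.e. $I(f)\ge0$ for every $f\in\mathcal E^+$), and $I(f)\le\bar I(f^+)$ for every $f\in\mathcal E$. Moreover, if one (and then both) of these conditions holds, then $\bar\sigma(f)=I(f)$ for every $f\in\mathcal E$ and $\bar I(f)=I(f)$ for every $f\in\mathcal E^+$.
   Context: Fix $s_0\in\mathbb R$. A trajectory set is any set $\mathcal S$ of real sequences $S=(S_j)_{j\in\mathbb N_0}$ with $S_0=s_0$. A simple portfolio $(V,n,H)$ consists of $V\in\mathbb R$, $n\in\mathbb N$ and functions $H_i:\mathcal S\to\mathbb R$, $0\le i\le n-1$, which are nonanticipating, i.e. $H_i(S)=h_i(S_0,\dots,S_i)$ for some (not necessarily measurable) $h_i:\mathbb R^{i+1}\to\mathbb R$. Its wealth process is $\Pi^{V,n,H}_j(S)=V+\sum_{i=0}^{\min\{j,n\}-1}H_i(S)(S_{i+1}-S_i)$, $j\in\mathbb N_0$, and $\Pi^{V,n,H}_\infty:=\Pi^{V,n,H}_n$. It is positive if $V\ge0$ and $\Pi^{V,n,H}_\infty\ge0$ on $\mathcal S$. A generalized portfolio is a sequence $(V_m,n_m,H_m)_{m\in\mathbb N_0}$ of simple portfolios with $(V_m,n_m,H_m)$ positive for every $m\ge1$; it is a positive generalized portfolio if moreover $\Pi^{V_0,n_0,H_0}_j\equiv0$ for all $j$. A financial position $f:\mathcal S\to[-\infty,+\infty]$ is superhedged by a generalized portfolio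 with initial endowment $V\in(-\infty,+\infty]$ if $f\le\sum_{m=0}^\infty\Pi^{V_m,n_m,H_m}_\infty$ pointwise on $\mathcal S$ and $V=\sum_{m=0}^\infty V_m$. For $f:\mathcal S\to[0,+\infty]$, $\bar I(f)$ is the infimum of all $V\in[0,+\infty]$ such that $f$ is superhedged by a positive generalized portfolio with initial endowment $V$; for any financial position $f$, $\bar\sigma(f)$ is the infimum of all $V\in(-\infty,+\infty]$ such that $f$ is superhedged by a generalized portfolio with initial endowment $V$. Let $\mathcal E=\{\Pi^{V,n,H}_\infty:(V,n,H)\text{ simple portfolio}\}$ and $\mathcal E^+=\{f\in\mathcal E: f\ge0 \text{ on }\mathcal S\}$. (LOP) is the condition: whenever two simple portfolios $(V_0,n_0,H_0)$, $(V_1,n_1,H_1)$ satisfy $\Pi^{V_1,n_1,H_1}_\infty(S)=\Pi^{V_0,n_0,H_0}_\infty(S)$ for all $S\in\mathcal S$, then $V_1=V_0$. Under (LOP), the hedging price functional $I:\mathcal E\to\mathbb R$, $I(\Pi^{V,n,H}_\infty)=V$, is well defined and linear. $f^+,f^-$ denote positive and negative parts. *)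

theory Defs
  imports "HOL-Analysis.Analysis"
begin

type_synonym traj = "nat \<Rightarrow> real"
type_synonym strategy = "nat \<Rightarrow> traj \<Rightarrow> real"

definition trajectory_set :: "real \<Rightarrow> traj set \<Rightarrow> bool" where
  "trajectory_set s0 SS \<longleftrightarrow> (\<forall>S\<in>SS. S 0 = s0)"

definition nonanticipating :: "traj set \<Rightarrow> nat \<Rightarrow> strategy \<Rightarrow> bool" where
  "nonanticipating SS n H \<longleftrightarrow>
     (\<forall>i<n. \<exists>h :: real list \<Rightarrow> real. \<forall>S\<in>SS. H i S = h (map S [0..<Suc i]))"

definition simple_portfolio :: "traj set \<Rightarrow> real \<Rightarrow> nat \<Rightarrow> strategy \<Rightarrow> bool" where
  "simple_portfolio SS V n H \<longleftrightarrow> n \<ge> 1 \<and> nonanticipating SS n H"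

definition wealth :: "real \<Rightarrow> nat \<Rightarrow> strategy \<Rightarrow> nat \<Rightarrow> traj \<Rightarrow> real" where
  "wealth V n H j S = V + (\<Sum>i<min j n. H i S * (S (Suc i) - S i))"

definition wealth_inf :: "real \<Rightarrow> nat \<Rightarrow> strategy \<Rightarrow> traj \<Rightarrow> real" where
  "wealth_inf V n H S = wealth V n H n S"

definition positive_portfolio :: "traj set \<Rightarrow> real \<Rightarrow> nat \<Rightarrow> strategy \<Rightarrow> bool" where
  "positive_portfolio SS V n H \<longleftrightarrow>
     simple_portfolio SS V n H \<and> V \<ge> 0 \<and> (\<forall>S\<in>SS. wealth_inf V n H S \<ge> 0)"

definition generalized_portfolio ::
  "traj set \<Rightarrow> (nat \<Rightarrow> real) \<Rightarrow> (nat \<Rightarrow> nat) \<Rightarrow> (nat \<Rightarrow> strategy) \<Rightarrow> bool" where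
  "generalized_portfolio SS Vs ns Hs \<longleftrightarrow>
     simple_portfolio SS (Vs 0) (ns 0) (Hs 0) \<and>
     (\<forall>m\<ge>1. positive_portfolio SS (Vs m) (ns m) (Hs m))"

definition positive_generalized_portfolio ::
  "traj set \<Rightarrow> (nat \<Rightarrow> real) \<Rightarrow> (nat \<Rightarrow> nat) \<Rightarrow> (nat \<Rightarrow> strategy) \<Rightarrow> bool" where
  "positive_generalized_portfolio SS Vs ns Hs \<longleftrightarrow>
     generalized_portfolio SS Vs ns Hs \<and>
     (\<forall>j. \<forall>S\<in>SS. wealth (Vs 0) (ns 0) (Hs 0) j S = 0)"

text \<open>Sum over m of a sequence whose terms for m >= 1 are nonnegative; value in
  (-infinity, +infinity]: first term plus the (extended) series of the nonnegative rest.\<close>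
definition gsum :: "(nat \<Rightarrow> real) \<Rightarrow> ereal" where
  "gsum x = ereal (x 0) + (\<Sum>m. ereal (x (Suc m)))"

definition superhedges ::
  "traj set \<Rightarrow> (traj \<Rightarrow> ereal) \<Rightarrow> (nat \<Rightarrow> real) \<Rightarrow> (nat \<Rightarrow> nat) \<Rightarrow> (nat \<Rightarrow> strategy) \<Rightarrow> ereal \<Rightarrow> bool" where
  "superhedges SS f Vs ns Hs V \<longleftrightarrow>
     (\<forall>S\<in>SS. f S \<le> gsum (\<lambda>m. wealth_inf (Vs m) (ns m) (Hs m) S)) \<and> V = gsum Vs"

definition upper_I :: "traj set \<Rightarrow> (traj \<Rightarrow> ereal) \<Rightarrow> ereal" where
  "upper_I SS f = Inf {V. V \<ge> 0 \<and> (\<exists>Vs ns Hs. positive_generalized_portfolio SS Vs ns Hs \<and>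
                                superhedges SS f Vs ns Hs V)}"

definition upper_sigma :: "traj set \<Rightarrow> (traj \<Rightarrow> ereal) \<Rightarrow> ereal" where
  "upper_sigma SS f = Inf {V. V \<noteq> -\<infinity> \<and> (\<exists>Vs ns Hs. generalized_portfolio SS Vs ns Hs \<and>
                                superhedges SS f Vs ns Hs V)}"

text \<open>Elements of E, identified through their values on SS.\<close>
definition in_E :: "traj set \<Rightarrow> (traj \<Rightarrow> real) \<Rightarrow> bool" where
  "in_E SS f \<longleftrightarrow> (\<exists>V n H. simple_portfolio SS V n H \<and> (\<forall>S\<in>SS. f S = wealth_inf V n H S))"

definition in_E_plus :: "traj set \<Rightarrow> (traj \<Rightarrow> real) \<Rightarrow> bool" where
  "in_E_plus SS f \<longleftrightarrow> in_E SS f \<and> (\<forall>S\<in>SS. f S \<ge> 0)"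

definition LOP :: "traj set \<Rightarrow> bool" where
  "LOP SS \<longleftrightarrow> (\<forall>V0 n0 H0 V1 n1 H1.
      simple_portfolio SS V0 n0 H0 \<longrightarrow> simple_portfolio SS V1 n1 H1 \<longrightarrow>
      (\<forall>S\<in>SS. wealth_inf V1 n1 H1 S = wealth_inf V0 n0 H0 S) \<longrightarrow> V1 = V0)"

text \<open>Hedging price functional (well defined under LOP).\<close>
definition hedging_price :: "traj set \<Rightarrow> (traj \<Rightarrow> real) \<Rightarrow> real" where
  "hedging_price SS f = (THE V. \<exists>n H. simple_portfolio SS V n H \<and>
                                   (\<forall>S\<in>SS. f S = wealth_inf V n H S))"

end

theory Submission
  imports Defs
begin

definition subH :: "nat \<Rightarrow> strategy \<Rightarrow> nat \<Rightarrow> strategy \<Rightarrow> strategy" where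
  "subH n0 H0 n1 H1 = (\<lambda>i S. (if i < n0 then H0 i S else 0) - (if i < n1 then H1 i S else 0))"

definition zH :: strategy where "zH = (\<lambda>i S. 0)"

lemma nonant_ext:
  assumes "nonanticipating SS n H"
  shows "nonanticipating SS m (\<lambda>i S. if i < n then H i S else 0)"
  unfolding nonanticipating_def
proof (intro allI impI)
  fix i assume "i < m"
  show "\<exists>h. \<forall>S\<in>SS. (if i < n then H i S else 0) = h (map S [0..<Suc i])"
  proof (cases "i < n")
    case True
    then obtain h where "\<forall>S\<in>SS. H i S = h (map S [0..<Suc i])"
      using assms unfolding nonanticipating_def by blast
    then show ?thesis using True by auto
  next
    case False
    then show ?thesis by (intro exI[of _ "\<lambda>_. 0"]) auto
  qed
qed

lemma nonant_diff:
  assumes "nonanticipating SS m H1" "nonanticipating SS m H2"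
  shows "nonanticipating SS m (\<lambda>i S. H1 i S - H2 i S)"
  unfolding nonanticipating_def
proof (intro allI impI)
  fix i assume "i < m"
  obtain h1 where h1: "\<forall>S\<in>SS. H1 i S = h1 (map S [0..<Suc i])"
    using assms(1) \<open>i < m\<close> unfolding nonanticipating_def by blast
  obtain h2 where h2: "\<forall>S\<in>SS. H2 i S = h2 (map S [0..<Suc i])"
    using assms(2) \<open>i < m\<close> unfolding nonanticipating_def by blast
  show "\<exists>h. \<forall>S\<in>SS. H1 i S - H2 i S = h (map S [0..<Suc i])"
    using h1 h2 by (intro exI[of _ "\<lambda>l. h1 l - h2 l"]) auto
qed

lemma sub_simple:
  assumes "simple_portfolio SS V0 n0 H0" "simple_portfolio SS V1 n1 H1"
  shows "simple_portfolio SS V (max n0 n1) (subH n0 H0 n1 H1)"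
  using assms unfolding simple_portfolio_def subH_def
  by (auto intro!: nonant_diff nonant_ext)

lemma sum_if_lt:
  fixes a :: "nat \<Rightarrow> real"
  assumes "n0 \<le> m"
  shows "(\<Sum>i<m. (if i < n0 then a i else 0)) = (\<Sum>i<n0. a i)"
proof -
  have "(\<Sum>i<m. (if i < n0 then a i else 0)) = (\<Sum>i\<in>{i\<in>{..<m}. i < n0}. a i)"
    by (subst sum.inter_filter) auto
  also have "{i\<in>{..<m}. i < n0} = {..<n0}" using assms by auto
  finally show ?thesis .
qed

lemma sub_wealth:
  "wealth_inf (V0 - V1) (max n0 n1) (subH n0 H0 n1 H1) S
     = wealth_inf V0 n0 H0 S - wealth_inf V1 n1 H1 S"
proof -
  have "(\<Sum>i<max n0 n1. subH n0 H0 n1 H1 i S * (S (Suc i) - S i))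
     = (\<Sum>i<max n0 n1. (if i < n0 then H0 i S * (S (Suc i) - S i) else 0))
       - (\<Sum>i<max n0 n1. (if i < n1 then H1 i S * (S (Suc i) - S i) else 0))"
    unfolding subH_def sum_subtractf[symmetric] by (rule sum.cong) (auto simp: left_diff_distrib)
  also have "\<dots> = (\<Sum>i<n0. H0 i S * (S (Suc i) - S i)) - (\<Sum>i<n1. H1 i S * (S (Suc i) - S i))"
    by (simp add: sum_if_lt)
  finally show ?thesis unfolding wealth_inf_def wealth_def by simp
qed

lemma zero_simple: "simple_portfolio SS 0 1 zH"
  unfolding simple_portfolio_def nonanticipating_def zH_def
  by (auto intro!: exI[of _ "\<lambda>_. 0"])

lemma zero_wealth: "wealth 0 1 zH j S = 0" "wealth 0 (Suc 0) zH j S = 0"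
  unfolding wealth_def zH_def by simp_all

lemma ereal_shift:
  fixes R :: ereal
  assumes "R \<ge> 0"
  shows "(ereal c \<le> ereal a + R) \<longleftrightarrow> (0 \<le> ereal (a - c) + R)"
  using assms by (cases R) auto

lemma tail_nonneg:
  assumes "\<And>m. x (Suc m) \<ge> 0"
  shows "(\<Sum>m. ereal (x (Suc m))) \<ge> 0"
  by (rule suminf_0_le) (use assms in auto)

lemma gen_tail_V:
  assumes "generalized_portfolio SS Vs ns Hs"
  shows "Vs (Suc m) \<ge> 0"
  using assms unfolding generalized_portfolio_def positive_portfolio_def by auto

lemma gen_tail_W:
  assumes "generalized_portfolio SS Vs ns Hs" "S \<in> SS"
  shows "wealth_inf (Vs (Suc m)) (ns (Suc m)) (Hs (Suc m)) S \<ge> 0"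
  using assms unfolding generalized_portfolio_def positive_portfolio_def by auto

lemma gsum_single:
  "gsum (\<lambda>m. if m = 0 then a else 0) = ereal a"
  unfolding gsum_def by (simp add: zero_ereal_def[symmetric])

lemma gsum_second:
  "gsum (\<lambda>m. if m = 1 then a else 0) = ereal a"
proof -
  have "(\<Sum>m. ereal (if Suc m = 1 then a else 0)) = (\<Sum>m\<in>{0}. ereal (if Suc m = 1 then a else 0))"
    by (rule suminf_finite) auto
  then show ?thesis unfolding gsum_def by (simp add: zero_ereal_def)
qed

lemma hp_eq:
  assumes "LOP SS" "simple_portfolio SS V n H" "\<forall>S\<in>SS. f S = wealth_inf V n H S"
  shows "hedging_price SS f = V"
  unfolding hedging_price_def
proof (rule the_equality)
  show "\<exists>n H. simple_portfolio SS V n H \<and> (\<forall>S\<in>SS. f S = wealth_inf V n H S)"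
    using assms by blast
next
  fix V' assume "\<exists>n H. simple_portfolio SS V' n H \<and> (\<forall>S\<in>SS. f S = wealth_inf V' n H S)"
  then obtain n' H' where "simple_portfolio SS V' n' H'" "\<forall>S\<in>SS. f S = wealth_inf V' n' H' S"
    by blast
  then show "V' = V" using assms unfolding LOP_def by metis
qed

lemma sigma_le:
  assumes "generalized_portfolio SS Vs ns Hs" "superhedges SS f Vs ns Hs V"
  shows "upper_sigma SS f \<le> V"
proof -
  have "V = ereal (Vs 0) + (\<Sum>m. ereal (Vs (Suc m)))" using assms(2)
    unfolding superhedges_def gsum_def by simp
  moreover have "(\<Sum>m. ereal (Vs (Suc m))) \<ge> 0"
    by (rule tail_nonneg) (rule gen_tail_V[OF assms(1)])
  ultimately have "V \<noteq> -\<infinity>" by auto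
  then show ?thesis unfolding upper_sigma_def using assms by (auto intro!: Inf_lower)
qed

lemma single_gen:
  assumes "simple_portfolio SS V n H"
  shows "generalized_portfolio SS (\<lambda>m. if m = 0 then V else 0) (\<lambda>m. if m = 0 then n else 1)
           (\<lambda>m. if m = 0 then H else zH)"
  using assms zero_simple unfolding generalized_portfolio_def positive_portfolio_def
  by (auto simp: wealth_inf_def zero_wealth)

lemma single_wealth:
  "(\<lambda>m. wealth_inf ((\<lambda>m. if m = 0 then V else 0) m) ((\<lambda>m. if m = 0 then n else 1) m)
           ((\<lambda>m. if m = 0 then H else zH) m) S) = (\<lambda>m. if m = 0 then wealth_inf V n H S else 0)"
  by (rule ext) (simp add: wealth_inf_def zero_wealth)

lemma keyA:
  assumes sig: "upper_sigma SS (\<lambda>S. 0) \<ge> 0"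
    and gp: "generalized_portfolio SS Vs ns Hs"
    and sp: "simple_portfolio SS V n H"
    and le: "\<forall>S\<in>SS. ereal (wealth_inf V n H S) \<le> gsum (\<lambda>m. wealth_inf (Vs m) (ns m) (Hs m) S)"
  shows "ereal V \<le> gsum Vs"
proof -
  define Vs' where "Vs' = Vs(0 := Vs 0 - V)"
  define ns' where "ns' = ns(0 := max (ns 0) n)"
  define Hs' where "Hs' = Hs(0 := subH (ns 0) (Hs 0) n H)"
  have gp0: "simple_portfolio SS (Vs 0) (ns 0) (Hs 0)" using gp unfolding generalized_portfolio_def by auto
  have gp': "generalized_portfolio SS Vs' ns' Hs'"
    using gp sub_simple[OF gp0 sp] unfolding generalized_portfolio_def Vs'_def ns'_def Hs'_def
    by auto
  have w': "(\<lambda>m. wealth_inf (Vs' m) (ns' m) (Hs' m) S) =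
     (\<lambda>m. wealth_inf (Vs m) (ns m) (Hs m) S)(0 := wealth_inf (Vs 0) (ns 0) (Hs 0) S - wealth_inf V n H S)"
    for S
    by (rule ext) (simp add: Vs'_def ns'_def Hs'_def sub_wealth)
  have "superhedges SS (\<lambda>S. 0) Vs' ns' Hs' (gsum Vs')"
    unfolding superhedges_def
  proof (intro conjI ballI refl)
    fix S assume S: "S \<in> SS"
    have R: "(\<Sum>m. ereal (wealth_inf (Vs (Suc m)) (ns (Suc m)) (Hs (Suc m)) S)) \<ge> 0"
      by (rule tail_nonneg) (rule gen_tail_W[OF gp S])
    show "0 \<le> gsum (\<lambda>m. wealth_inf (Vs' m) (ns' m) (Hs' m) S)"
      using le S ereal_shift[OF R, of "wealth_inf V n H S" "wealth_inf (Vs 0) (ns 0) (Hs 0) S"]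
      unfolding w' gsum_def by simp
  qed
  then have "upper_sigma SS (\<lambda>S. 0) \<le> gsum Vs'" by (rule sigma_le[OF gp'])
  with sig have "0 \<le> gsum Vs'" by simp
  moreover have R: "(\<Sum>m. ereal (Vs (Suc m))) \<ge> 0"
    by (rule tail_nonneg) (rule gen_tail_V[OF gp])
  ultimately show ?thesis using ereal_shift[OF R] unfolding gsum_def Vs'_def by simp
qed

lemma sigma_zero_le: "upper_sigma SS (\<lambda>S. 0) \<le> 0"
proof -
  have "generalized_portfolio SS (\<lambda>m. if m = 0 then 0 else 0) (\<lambda>m. if m = 0 then 1 else 1)
           (\<lambda>m. if m = 0 then zH else zH)" by (rule single_gen[OF zero_simple])
  moreover have "superhedges SS (\<lambda>S. 0) (\<lambda>m. if m = 0 then 0 else 0) (\<lambda>m. if m = 0 then 1 else 1)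
           (\<lambda>m. if m = 0 then zH else zH) 0"
    unfolding superhedges_def single_wealth
    by (simp add: gsum_def zero_ereal_def[symmetric] wealth_inf_def zero_wealth)
  ultimately show ?thesis by (rule sigma_le)
qed

lemma keyB:
  assumes sig: "upper_sigma SS (\<lambda>S. 0) \<ge> 0"
    and sp: "simple_portfolio SS V n H" and sp': "simple_portfolio SS V' n' H'"
    and le: "\<forall>S\<in>SS. wealth_inf V n H S \<le> wealth_inf V' n' H' S"
  shows "V \<le> V'"
proof -
  have "ereal V \<le> gsum (\<lambda>m. if m = 0 then V' else 0)"
  proof (rule keyA[OF sig single_gen[OF sp'] sp])
    show "\<forall>S\<in>SS. ereal (wealth_inf V n H S) \<le> gsum (\<lambda>m. wealth_inf
       ((\<lambda>m. if m = 0 then V' else 0) m) ((\<lambda>m. if m = 0 then n' else 1) m)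
       ((\<lambda>m. if m = 0 then H' else zH) m) S)"
      unfolding single_wealth gsum_single using le by simp
  qed
  then show ?thesis unfolding gsum_single by simp
qed

lemma zero_winf: "wealth_inf 0 1 zH S = 0" "wealth_inf 0 (Suc 0) zH S = 0"
  by (simp_all add: wealth_inf_def zero_wealth)

lemma zero_positive: "positive_portfolio SS 0 1 zH"
  unfolding positive_portfolio_def using zero_simple by (simp add: zero_winf)

lemma dir1:
  assumes sig: "upper_sigma SS (\<lambda>S. 0) \<ge> 0"
  shows "LOP SS" and "\<forall>f. in_E_plus SS f \<longrightarrow> hedging_price SS f \<ge> 0"
    and "\<forall>f. in_E SS f \<longrightarrow> ereal (hedging_price SS f) \<le> upper_I SS (\<lambda>S. ereal (max (f S) 0))"
    and "\<forall>f. in_E SS f \<longrightarrow> upper_sigma SS (\<lambda>S. ereal (f S)) = ereal (hedging_price SS f)"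
    and "\<forall>f. in_E_plus SS f \<longrightarrow> upper_I SS (\<lambda>S. ereal (f S)) = ereal (hedging_price SS f)"
proof -
  show lop: "LOP SS"
    unfolding LOP_def
  proof (intro allI impI)
    fix V0 n0 H0 V1 n1 H1
    assume a: "simple_portfolio SS V0 n0 H0" "simple_portfolio SS V1 n1 H1"
      "\<forall>S\<in>SS. wealth_inf V1 n1 H1 S = wealth_inf V0 n0 H0 S"
    have "V1 \<le> V0" by (rule keyB[OF sig a(2) a(1)]) (use a(3) in simp)
    moreover have "V0 \<le> V1" by (rule keyB[OF sig a(1) a(2)]) (use a(3) in simp)
    ultimately show "V1 = V0" by simp
  qed
  show pos: "\<forall>f. in_E_plus SS f \<longrightarrow> hedging_price SS f \<ge> 0"
  proof (intro allI impI)
    fix f assume "in_E_plus SS f"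
    then obtain V n H where sp: "simple_portfolio SS V n H" and fe: "\<forall>S\<in>SS. f S = wealth_inf V n H S"
      and fp: "\<forall>S\<in>SS. f S \<ge> 0"
      unfolding in_E_plus_def in_E_def by blast
    have "0 \<le> V" by (rule keyB[OF sig zero_simple sp]) (use fe fp in \<open>simp add: zero_winf\<close>)
    then show "hedging_price SS f \<ge> 0" using hp_eq[OF lop sp fe] by simp
  qed
  show "\<forall>f. in_E SS f \<longrightarrow> ereal (hedging_price SS f) \<le> upper_I SS (\<lambda>S. ereal (max (f S) 0))"
  proof (intro allI impI)
    fix f assume "in_E SS f"
    then obtain V n H where sp: "simple_portfolio SS V n H" and fe: "\<forall>S\<in>SS. f S = wealth_inf V n H S"
      unfolding in_E_def by blast
    have "ereal V \<le> upper_I SS (\<lambda>S. ereal (max (f S) 0))"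
      unfolding upper_I_def
    proof (rule Inf_greatest, clarify)
      fix V' Vs ns Hs
      assume pg: "positive_generalized_portfolio SS Vs ns Hs"
        and sh: "superhedges SS (\<lambda>S. ereal (max (f S) 0)) Vs ns Hs V'"
      have gp: "generalized_portfolio SS Vs ns Hs" using pg unfolding positive_generalized_portfolio_def by simp
      have "ereal V \<le> gsum Vs"
      proof (rule keyA[OF sig gp sp], intro ballI)
        fix S assume S: "S \<in> SS"
        have "ereal (wealth_inf V n H S) \<le> ereal (max (f S) 0)" using fe S by simp
        also have "\<dots> \<le> gsum (\<lambda>m. wealth_inf (Vs m) (ns m) (Hs m) S)"
          using sh S unfolding superhedges_def by blast
        finally show "ereal (wealth_inf V n H S) \<le> gsum (\<lambda>m. wealth_inf (Vs m) (ns m) (Hs m) S)" .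
      qed
      then show "ereal V \<le> V'" using sh unfolding superhedges_def by simp
    qed
    then show "ereal (hedging_price SS f) \<le> upper_I SS (\<lambda>S. ereal (max (f S) 0))"
      using hp_eq[OF lop sp fe] by simp
  qed
  show "\<forall>f. in_E SS f \<longrightarrow> upper_sigma SS (\<lambda>S. ereal (f S)) = ereal (hedging_price SS f)"
  proof (intro allI impI)
    fix f assume "in_E SS f"
    then obtain V n H where sp: "simple_portfolio SS V n H" and fe: "\<forall>S\<in>SS. f S = wealth_inf V n H S"
      unfolding in_E_def by blast
    have "upper_sigma SS (\<lambda>S. ereal (f S)) \<le> ereal V"
    proof (rule sigma_le[OF single_gen[OF sp]])
      show "superhedges SS (\<lambda>S. ereal (f S)) (\<lambda>m. if m = 0 then V else 0) (\<lambda>m. if m = 0 then n else 1)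
            (\<lambda>m. if m = 0 then H else zH) (ereal V)"
        unfolding superhedges_def single_wealth gsum_single using fe by simp
    qed
    moreover have "ereal V \<le> upper_sigma SS (\<lambda>S. ereal (f S))"
      unfolding upper_sigma_def
    proof (rule Inf_greatest, clarify)
      fix V' Vs ns Hs
      assume gp: "generalized_portfolio SS Vs ns Hs"
        and sh: "superhedges SS (\<lambda>S. ereal (f S)) Vs ns Hs V'"
      have "ereal V \<le> gsum Vs"
        by (rule keyA[OF sig gp sp]) (use sh fe in \<open>auto simp: superhedges_def\<close>)
      then show "ereal V \<le> V'" using sh unfolding superhedges_def by simp
    qed
    ultimately show "upper_sigma SS (\<lambda>S. ereal (f S)) = ereal (hedging_price SS f)"
      using hp_eq[OF lop sp fe] by simp
  qed
  show "\<forall>f. in_E_plus SS f \<longrightarrow> upper_I SS (\<lambda>S. ereal (f S)) = ereal (hedging_price SS f)"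
  proof (intro allI impI)
    fix f assume fE: "in_E_plus SS f"
    then obtain V n H where sp: "simple_portfolio SS V n H" and fe: "\<forall>S\<in>SS. f S = wealth_inf V n H S"
      and fp: "\<forall>S\<in>SS. f S \<ge> 0"
      unfolding in_E_plus_def in_E_def by blast
    have hp: "hedging_price SS f = V" by (rule hp_eq[OF lop sp fe])
    have V0: "V \<ge> 0" using pos fE hp by auto
    define Vs where "Vs = (\<lambda>m::nat. if m = 1 then V else 0)"
    define ns where "ns = (\<lambda>m::nat. if m = 1 then n else 1)"
    define Hs where "Hs = (\<lambda>m::nat. if m = 1 then H else zH)"
    have ww: "(\<lambda>m. wealth_inf (Vs m) (ns m) (Hs m) S) = (\<lambda>m. if m = 1 then wealth_inf V n H S else 0)" for S
      by (rule ext) (simp add: Vs_def ns_def Hs_def zero_winf)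
    have pp: "positive_portfolio SS V n H"
      unfolding positive_portfolio_def using sp V0 fe fp by auto
    have pg: "positive_generalized_portfolio SS Vs ns Hs"
      unfolding positive_generalized_portfolio_def generalized_portfolio_def
      using zero_simple pp zero_positive by (auto simp: Vs_def ns_def Hs_def zero_wealth)
    have sh: "superhedges SS (\<lambda>S. ereal (f S)) Vs ns Hs (ereal V)"
      unfolding superhedges_def
    proof (intro conjI ballI)
      fix S assume S: "S \<in> SS"
      show "ereal (f S) \<le> gsum (\<lambda>m. wealth_inf (Vs m) (ns m) (Hs m) S)"
        unfolding ww gsum_second using fe S by simp
    next
      show "ereal V = gsum Vs" by (simp only: Vs_def gsum_second)
    qed
    have "upper_I SS (\<lambda>S. ereal (f S)) \<le> ereal V"
      unfolding upper_I_def using pg sh V0 by (intro Inf_lower) auto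
    moreover have "ereal V \<le> upper_I SS (\<lambda>S. ereal (f S))"
      unfolding upper_I_def
    proof (rule Inf_greatest, clarify)
      fix V' Vs ns Hs
      assume pg: "positive_generalized_portfolio SS Vs ns Hs"
        and sh: "superhedges SS (\<lambda>S. ereal (f S)) Vs ns Hs V'"
      have gp: "generalized_portfolio SS Vs ns Hs" using pg unfolding positive_generalized_portfolio_def by simp
      have "ereal V \<le> gsum Vs"
        by (rule keyA[OF sig gp sp]) (use sh fe in \<open>auto simp: superhedges_def\<close>)
      then show "ereal V \<le> V'" using sh unfolding superhedges_def by simp
    qed
    ultimately show "upper_I SS (\<lambda>S. ereal (f S)) = ereal (hedging_price SS f)" using hp by simp
  qed
qed

lemma dir2:
  assumes lop: "LOP SS"
    and ib: "\<forall>f. in_E SS f \<longrightarrow> ereal (hedging_price SS f) \<le> upper_I SS (\<lambda>S. ereal (max (f S) 0))"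
  shows "upper_sigma SS (\<lambda>S. 0) \<ge> 0"
  unfolding upper_sigma_def
proof (rule Inf_greatest, clarify)
  fix V Vs ns Hs
  assume gp: "generalized_portfolio SS Vs ns Hs" and sh: "superhedges SS (\<lambda>S. 0) Vs ns Hs V"
  have gp0: "simple_portfolio SS (Vs 0) (ns 0) (Hs 0)" using gp unfolding generalized_portfolio_def by auto
  define g where "g = (\<lambda>S. - wealth_inf (Vs 0) (ns 0) (Hs 0) S)"
  have spg: "simple_portfolio SS (0 - Vs 0) (max 1 (ns 0)) (subH 1 zH (ns 0) (Hs 0))"
    by (rule sub_simple[OF zero_simple gp0])
  have ge: "\<forall>S\<in>SS. g S = wealth_inf (0 - Vs 0) (max 1 (ns 0)) (subH 1 zH (ns 0) (Hs 0)) S"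
    unfolding g_def sub_wealth by (simp add: zero_winf)
  have "in_E SS g" unfolding in_E_def using spg ge by blast
  with ib have "ereal (hedging_price SS g) \<le> upper_I SS (\<lambda>S. ereal (max (g S) 0))" by blast
  moreover have "hedging_price SS g = - Vs 0" using hp_eq[OF lop spg ge] by simp
  ultimately have i1: "ereal (- Vs 0) \<le> upper_I SS (\<lambda>S. ereal (max (g S) 0))" by simp
  define R where "R = (\<Sum>m. ereal (Vs (Suc m)))"
  have R0: "R \<ge> 0" unfolding R_def by (rule tail_nonneg) (rule gen_tail_V[OF gp])
  define Vs' where "Vs' = Vs(0 := 0)"
  define ns' where "ns' = ns(0 := 1)"
  define Hs' where "Hs' = Hs(0 := zH)"
  have ww: "(\<lambda>m. wealth_inf (Vs' m) (ns' m) (Hs' m) S) = (\<lambda>m. wealth_inf (Vs m) (ns m) (Hs m) S)(0 := 0)" for S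
    by (rule ext) (simp add: Vs'_def ns'_def Hs'_def zero_winf)
  have pg: "positive_generalized_portfolio SS Vs' ns' Hs'"
    using gp zero_simple unfolding positive_generalized_portfolio_def generalized_portfolio_def
    by (auto simp: Vs'_def ns'_def Hs'_def zero_wealth)
  have sh': "superhedges SS (\<lambda>S. ereal (max (g S) 0)) Vs' ns' Hs' R"
    unfolding superhedges_def
  proof (intro conjI ballI)
    fix S assume S: "S \<in> SS"
    define RW where "RW = (\<Sum>m. ereal (wealth_inf (Vs (Suc m)) (ns (Suc m)) (Hs (Suc m)) S))"
    have RW0: "RW \<ge> 0" unfolding RW_def by (rule tail_nonneg) (rule gen_tail_W[OF gp S])
    have "0 \<le> ereal (wealth_inf (Vs 0) (ns 0) (Hs 0) S) + RW"
      using sh S unfolding superhedges_def gsum_def RW_def by auto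
    then have "ereal (g S) \<le> RW" unfolding g_def using RW0 by (cases RW) auto
    then have "ereal (max (g S) 0) \<le> RW" using RW0 by (cases "g S \<le> 0") (auto simp: max_def zero_ereal_def)
    then show "ereal (max (g S) 0) \<le> gsum (\<lambda>m. wealth_inf (Vs' m) (ns' m) (Hs' m) S)"
      unfolding ww gsum_def RW_def by (simp add: zero_ereal_def[symmetric])
  next
    show "R = gsum Vs'" unfolding gsum_def R_def Vs'_def by (simp add: zero_ereal_def[symmetric])
  qed
  have "upper_I SS (\<lambda>S. ereal (max (g S) 0)) \<le> R"
    unfolding upper_I_def using pg sh' R0 by (intro Inf_lower) auto
  with i1 have "ereal (- Vs 0) \<le> R" by simp
  then have "0 \<le> ereal (Vs 0) + R" using R0 by (cases R) auto
  then show "0 \<le> V" using sh unfolding superhedges_def gsum_def R_def by simp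
qed

theorem proposition3p3:
  fixes s0 :: real and SS :: "traj set"
  assumes "trajectory_set s0 SS"
  shows "(upper_sigma SS (\<lambda>S. 0) \<ge> 0 \<longleftrightarrow>
           (LOP SS \<and> (\<forall>f. in_E_plus SS f \<longrightarrow> hedging_price SS f \<ge> 0) \<and>
            (\<forall>f. in_E SS f \<longrightarrow>
               ereal (hedging_price SS f) \<le> upper_I SS (\<lambda>S. ereal (max (f S) 0)))))
       \<and> (upper_sigma SS (\<lambda>S. 0) \<ge> 0 \<longrightarrow>
           (\<forall>f. in_E SS f \<longrightarrow> upper_sigma SS (\<lambda>S. ereal (f S)) = ereal (hedging_price SS f)) \<and>
           (\<forall>f. in_E_plus SS f \<longrightarrow> upper_I SS (\<lambda>S. ereal (f S)) = ereal (hedging_price SS f)))"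
proof (rule conjI)
  show "upper_sigma SS (\<lambda>S. 0) \<ge> 0 \<longleftrightarrow>
           (LOP SS \<and> (\<forall>f. in_E_plus SS f \<longrightarrow> hedging_price SS f \<ge> 0) \<and>
            (\<forall>f. in_E SS f \<longrightarrow>
               ereal (hedging_price SS f) \<le> upper_I SS (\<lambda>S. ereal (max (f S) 0))))"
  proof (rule iffI)
    assume s: "upper_sigma SS (\<lambda>S. 0) \<ge> 0"
    show "LOP SS \<and> (\<forall>f. in_E_plus SS f \<longrightarrow> hedging_price SS f \<ge> 0) \<and>
            (\<forall>f. in_E SS f \<longrightarrow>
               ereal (hedging_price SS f) \<le> upper_I SS (\<lambda>S. ereal (max (f S) 0)))"
      by (rule conjI[OF dir1(1)[OF s] conjI[OF dir1(2)[OF s] dir1(3)[OF s]]])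
  next
    assume "LOP SS \<and> (\<forall>f. in_E_plus SS f \<longrightarrow> hedging_price SS f \<ge> 0) \<and>
            (\<forall>f. in_E SS f \<longrightarrow>
               ereal (hedging_price SS f) \<le> upper_I SS (\<lambda>S. ereal (max (f S) 0)))"
    then show "upper_sigma SS (\<lambda>S. 0) \<ge> 0" by (elim conjE) (rule dir2)
  qed
next
  show "upper_sigma SS (\<lambda>S. 0) \<ge> 0 \<longrightarrow>
           (\<forall>f. in_E SS f \<longrightarrow> upper_sigma SS (\<lambda>S. ereal (f S)) = ereal (hedging_price SS f)) \<and>
           (\<forall>f. in_E_plus SS f \<longrightarrow> upper_I SS (\<lambda>S. ereal (f S)) = ereal (hedging_price SS f))"
  proof (rule impI)
    assume s: "upper_sigma SS (\<lambda>S. 0) \<ge> 0"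
    show "(\<forall>f. in_E SS f \<longrightarrow> upper_sigma SS (\<lambda>S. ereal (f S)) = ereal (hedging_price SS f)) \<and>
           (\<forall>f. in_E_plus SS f \<longrightarrow> upper_I SS (\<lambda>S. ereal (f S)) = ereal (hedging_price SS f))"
      by (rule conjI[OF dir1(4)[OF s] dir1(5)[OF s]])
  qed
qed

end
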